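(* Let $f$ be a complex polynomial of degree $d>1$ and let $K(f)=\{z\in\mathbb{C}:(f^k(z))_k \text{ is bounded}\}$ be its filled-in Julia set. Then the sequence of iterates $(f^k)_{k\ge1}$, where $f^k=f\circ\cdots\circ f$ ($k$ times), centers on $K(f)$.
   Context: Definition (centering): Let $C\subset\mathbb{C}$ be non-empty and compact. A sequence of polynomials $(q_k)_k$ centers on $C$ if there exist $R>0$ and $k_0$ such that (1) all zeros of $q_k$ lie in $\mathbb{D}(0,R)$ for $k\ge k_0$; (2) for every closed $L\subset\mathbb{C}$ with $L\cap C=\emptyset$ there is $M(L)$ such that the number of zeros of $q_k$ in $L$ (with multiplicity) is at most $M(L)$ for $k\ge k_0$. *)

theory Defs
  imports "HOL-Analysis.Analysis" "HOL-Computational_Algebra.Polynomial"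
begin

definition zero_count :: "complex poly \<Rightarrow> complex set \<Rightarrow> nat" where
  "zero_count q L = (\<Sum>z\<in>{z\<in>L. poly q z = 0}. order z q)"

definition centers_on :: "(nat \<Rightarrow> complex poly) \<Rightarrow> complex set \<Rightarrow> bool" where
  "centers_on q C \<longleftrightarrow>
     (\<exists>R>0. \<exists>k0. (\<forall>k\<ge>k0. \<forall>z. poly (q k) z = 0 \<longrightarrow> z \<in> ball 0 R) \<and>
        (\<forall>L. closed L \<and> L \<inter> C = {} \<longrightarrow> (\<exists>M. \<forall>k\<ge>k0. zero_count (q k) L \<le> M)))"

definition poly_iter :: "complex poly \<Rightarrow> nat \<Rightarrow> complex poly" where
  "poly_iter f k = ((\<lambda>p. pcompose f p) ^^ k) [:0, 1:]"

definition filled_julia :: "complex poly \<Rightarrow> complex set" where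
  "filled_julia f = {z. bounded (range (\<lambda>k. ((poly f) ^^ k) z))}"

end

theory Submission
  imports Defs "HOL-Computational_Algebra.Fundamental_Theorem_Algebra"
begin

lemma poly_iter_eval: "poly (poly_iter f k) = ((poly f) ^^ k)"
proof (induction k)
  case 0
  show ?case by (auto simp: poly_iter_def)
next
  case (Suc k)
  have "poly_iter f (Suc k) = pcompose f (poly_iter f k)"
    by (simp add: poly_iter_def)
  then show ?case using Suc by (auto simp: poly_pcompose)
qed

lemma escape_radius:
  fixes f :: "complex poly"
  assumes "degree f > 1"
  shows "\<exists>R0\<ge>1. \<forall>z. norm z > R0 \<longrightarrow> norm (poly f z) > norm z"
proof -
  obtain a p where f: "f = pCons a p" by (cases f) auto
  have dp: "degree p \<ge> 1" using assms f by (cases "p = 0") auto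
  obtain b p' where p: "p = pCons b p'" by (cases p) auto
  have "p' \<noteq> 0" using dp p by auto
  from poly_infinity[OF this, of "2 + norm a" b]
  obtain r where r: "\<And>z. r \<le> norm z \<Longrightarrow> 2 + norm a \<le> norm (poly p z)"
    using p by auto
  show ?thesis
  proof (intro exI[of _ "max r 1"] conjI allI impI)
    fix z :: complex assume z: "norm z > max r 1"
    have pz: "2 + norm a \<le> norm (poly p z)" using r z by auto
    have "norm (z * poly p z) \<ge> norm z * (2 + norm a)"
      using pz z by (simp add: norm_mult mult_left_mono)
    moreover have "norm (poly f z) \<ge> norm (z * poly p z) - norm a"
      using f norm_triangle_ineq2[of "z * poly p z" "- a"] by (simp add: add.commute)
    moreover have "norm z * (2 + norm a) - norm a > norm z"
    proof -
      have "norm z * (1 + norm a) > norm a" using z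
        by (smt (verit, best) mult_less_cancel_right1 mult_strict_right_mono norm_ge_zero)
      then show ?thesis by (simp add: algebra_simps)
    qed
    ultimately show "norm (poly f z) > norm z" by linarith
  qed auto
qed

theorem mainTheorem10:
  fixes f :: "complex poly"
  assumes "degree f > 1"
  shows "centers_on (\<lambda>k. poly_iter f (Suc k)) (filled_julia f)"
proof -
  obtain R0 where R0: "R0 \<ge> 1" and esc: "\<And>z. norm z > R0 \<Longrightarrow> norm (poly f z) > norm z"
    using escape_radius[OF assms] by blast
  have stay: "norm (((poly f) ^^ m) z) > R0" if "norm z > R0" for m z
    using that
  proof (induction m)
    case 0 then show ?case by simp
  next
    case (Suc m)
    then show ?case using esc[of "((poly f) ^^ m) z"] by simp
  qed
  have stay2: "norm (((poly f) ^^ m) z) > R0" if "norm (((poly f) ^^ n) z) > R0" "n \<le> m" for m n z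
  proof -
    obtain j where m: "m = j + n" using \<open>n \<le> m\<close> le_Suc_ex by (metis add.commute)
    have "((poly f) ^^ m) z = ((poly f) ^^ j) (((poly f) ^^ n) z)"
      by (simp add: m funpow_add)
    then show ?thesis using stay[OF that(1)] by simp
  qed
  have zeros_in: "norm z \<le> R0" if "poly (poly_iter f k) z = 0" for k z
  proof (rule ccontr)
    assume "\<not> norm z \<le> R0"
    then have "norm (((poly f) ^^ k) z) > R0" using stay by simp
    then show False using that R0 by (simp add: poly_iter_eval)
  qed
  show ?thesis unfolding centers_on_def
  proof (intro exI[of _ "R0 + 1"] conjI exI[of _ "0::nat"])
    show "R0 + 1 > 0" using R0 by simp
  next
    show "\<forall>k\<ge>0. \<forall>z. poly (poly_iter f (Suc k)) z = 0 \<longrightarrow> z \<in> ball 0 (R0 + 1)"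
    proof (intro allI impI)
      fix k z assume "poly (poly_iter f (Suc k)) z = 0"
      then have "norm z \<le> R0" by (rule zeros_in)
      then show "z \<in> ball 0 (R0 + 1)" by simp
    qed
  next
    show "\<forall>L. closed L \<and> L \<inter> filled_julia f = {} \<longrightarrow> (\<exists>M. \<forall>k\<ge>0. zero_count (poly_iter f (Suc k)) L \<le> M)"
    proof (intro allI impI)
    fix L :: "complex set" assume L: "closed L \<and> L \<inter> filled_julia f = {}"
    define L' where "L' = L \<inter> cball 0 R0"
    have cL': "compact L'" unfolding L'_def using L
      by (simp add: closed_Int_compact)
    define U where "U n = {z. R0 < norm (((poly f) ^^ n) z)}" for n
    have opn: "open (U n)" for n
    proof -
      have "U n = {z. (\<lambda>_. R0) z < norm (poly (poly_iter f n) z)}"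
        by (simp add: U_def poly_iter_eval)
      also have "open \<dots>"
        by (intro open_Collect_less continuous_intros)
      finally show ?thesis .
    qed
    have cov: "L' \<subseteq> (\<Union>n\<in>UNIV. U n)"
    proof
      fix z assume "z \<in> L'"
      then have "z \<notin> filled_julia f" using L L'_def by auto
      then have "\<not> bounded (range (\<lambda>k. ((poly f) ^^ k) z))" by (simp add: filled_julia_def)
      then obtain n where "\<not> norm (((poly f) ^^ n) z) \<le> R0"
        unfolding bounded_iff by auto
      then have "z \<in> U n" unfolding U_def mem_Collect_eq by linarith
      then show "z \<in> (\<Union>n\<in>UNIV. U n)" by blast
    qed
    obtain C' where "C' \<subseteq> UNIV" "finite C'" and C': "L' \<subseteq> (\<Union>n\<in>C'. U n)"
      by (rule compactE_image[OF cL' opn cov])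
    then obtain N where "C' \<subseteq> {..<N}"
      using finite_nat_iff_bounded by blast
    then have N: "\<And>n. n \<in> C' \<Longrightarrow> n < N" by blast
    have nozero: "zero_count (poly_iter f (Suc k)) L = 0" if "k \<ge> N" for k
    proof -
      have e: "{z\<in>L. poly (poly_iter f (Suc k)) z = 0} = {}"
      proof (rule ccontr)
        assume "{z\<in>L. poly (poly_iter f (Suc k)) z = 0} \<noteq> {}"
        then obtain z where z: "z \<in> L" "poly (poly_iter f (Suc k)) z = 0" by auto
        then have "z \<in> L'" using zeros_in L'_def by auto
        then obtain n where "n \<in> C'" "z \<in> U n" using C' by auto
        then have "norm (((poly f) ^^ n) z) > R0" "n \<le> Suc k" using N[of n] that
          by (auto simp: U_def)
        then have "norm (((poly f) ^^ Suc k) z) > R0" using stay2[where m="Suc k" and n=n and z=z] by linarith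
        then show False using z R0 by (simp add: poly_iter_eval)
      qed
      show ?thesis unfolding zero_count_def e by simp
    qed
    have "zero_count (poly_iter f (Suc k)) L \<le> (\<Sum>k<N. zero_count (poly_iter f (Suc k)) L)" for k
    proof (cases "k < N")
      case True
      then show ?thesis by (intro member_le_sum) auto
    next
      case False then show ?thesis using nozero by simp
    qed
    then show "\<exists>M. \<forall>k\<ge>0. zero_count (poly_iter f (Suc k)) L \<le> M"
      by (intro exI[of _ "\<Sum>k<N. zero_count (poly_iter f (Suc k)) L"] allI impI)
  qed
  qed
qed

end
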